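(* Let $k$ be a field of characteristic $\neq 2$ and let $\mathfrak f$ be the Lie algebra over $k$ generated by $z_0,z_1,z_2$ subject to the relations, for every $i\in\{0,1,2\}$ with indices taken modulo $3$: $[[z_i,z_{i+1}],z_{i+2}]=0$; $[z_i,[z_i,z_{i+1}]]=z_{i+1}+[z_{i+2},z_i]$; $\bigl[[z_{i+1},[z_{i+1},[z_{i+1},z_i]]],[z_{i+1},z_i]\bigr]=0$. Then for any $i,j\in\{0,1,2\}$ (indices modulo $3$): $[(\mathrm{ad}_{z_i})^2(z_j),z_j]=0$; $\bigl[[z_{i-1},z_i],[z_i,z_{i+1}]\bigr]=z_i$; and $(\mathrm{ad}_{[z_i,z_{i+1}]})^3(z_{i+1})=(\mathrm{ad}_{z_{i+1}})^2(z_i)-(\mathrm{ad}_{z_{i+1}})^4(z_i)$. *)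

theory Defs
  imports Main "HOL.Modules"
begin

definition lie_algebra :: "('k::field \<Rightarrow> 'v::ab_group_add \<Rightarrow> 'v) \<Rightarrow> ('v \<Rightarrow> 'v \<Rightarrow> 'v) \<Rightarrow> bool" where
  "lie_algebra sc br \<longleftrightarrow>
     module sc \<and>
     (\<forall>x y z. br (x + y) z = br x z + br y z) \<and>
     (\<forall>x y z. br x (y + z) = br x y + br x z) \<and>
     (\<forall>a x y. br (sc a x) y = sc a (br x y)) \<and>
     (\<forall>a x y. br x (sc a y) = sc a (br x y)) \<and>
     (\<forall>x. br x x = 0) \<and>
     (\<forall>x y z. br x (br y z) + br y (br z x) + br z (br x y) = 0)"

definition ad :: "('v \<Rightarrow> 'v \<Rightarrow> 'v) \<Rightarrow> 'v \<Rightarrow> 'v \<Rightarrow> 'v" where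
  "ad br x = (\<lambda>y. br x y)"

definition f_relations :: "('v::ab_group_add \<Rightarrow> 'v \<Rightarrow> 'v) \<Rightarrow> (nat \<Rightarrow> 'v) \<Rightarrow> bool" where
  "f_relations br z \<longleftrightarrow>
    (\<forall>i<3. br (br (z i) (z ((i+1) mod 3))) (z ((i+2) mod 3)) = 0 \<and>
           br (z i) (br (z i) (z ((i+1) mod 3))) = z ((i+1) mod 3) + br (z ((i+2) mod 3)) (z i) \<and>
           br (br (z ((i+1) mod 3)) (br (z ((i+1) mod 3)) (br (z ((i+1) mod 3)) (z i))))
              (br (z ((i+1) mod 3)) (z i)) = 0)"

end

theory Submission
  imports Defs
begin

locale lbr =
  fixes br :: "'v::ab_group_add \<Rightarrow> 'v \<Rightarrow> 'v"
  assumes addl: "\<And>a b c. br (a + b) c = br a c + br b c"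
    and addr: "\<And>a b c. br a (b + c) = br a b + br a c"
    and alt: "\<And>a. br a a = 0"
    and jac: "\<And>a b c. br a (br b c) + br b (br c a) + br c (br a b) = 0"
begin

lemma zl: "br 0 a = 0"
  using addl[of 0 0 a] by simp

lemma zr: "br a 0 = 0"
  using addr[of a 0 0] by simp

lemma anti: "br a b = - br b a"
proof -
  have "br (a + b) (a + b) = 0" by (rule alt)
  hence "br a a + br b a + (br a b + br b b) = 0" by (simp add: addl addr)
  thus ?thesis by (simp add: alt eq_neg_iff_add_eq_0 add.commute)
qed

lemma negl: "br (- a) b = - br a b"
  using addl[of a "-a" b] zl by (simp add: eq_neg_iff_add_eq_0 add.commute)

lemma negr: "br a (- b) = - br a b"
  using addr[of a b "-b"] zr by (simp add: eq_neg_iff_add_eq_0 add.commute)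

lemma diffr: "br a (b - c) = br a b - br a c"
  using addr[of a b "-c"] negr[of a c] by simp

lemma der: "br a (br b c) = br (br a b) c + br b (br a c)"
proof -
  have "br a (br b c) = - br b (br c a) - br c (br a b)"
    using jac[of a b c] by (simp add: algebra_simps eq_neg_iff_add_eq_0)
  also have "br b (br c a) = - br b (br a c)" using anti[of c a] negr by simp
  also have "br c (br a b) = - br (br a b) c" by (rule anti)
  finally show ?thesis by simp
qed

lemma c2:
  assumes r1a: "br (br x y) w = 0"
    and r2a: "br x (br x y) = y + br w x"
    and r2c: "br w (br w x) = x + br y w"
  shows "br (br w x) (br x y) = x"
proof -
  have "br w (br x (br x y)) = br (br w x) (br x y) + br x (br w (br x y))" by (rule der)
  moreover have "br w (br x y) = 0" using r1a anti[of w "br x y"] by simp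
  moreover have "br w (br x (br x y)) = x"
    using r2a r2c anti[of w y] by (simp add: addr)
  ultimately show ?thesis by (simp add: zr)
qed

lemma core:
  assumes r1a: "br (br x y) w = 0" and r1b: "br (br y w) x = 0" and r1c: "br (br w x) y = 0"
    and r2a: "br x (br x y) = y + br w x"
    and r2b: "br y (br y w) = w + br x y"
    and r2c: "br w (br w x) = x + br y w"
    and r3: "br (br y (br y (br y x))) (br y x) = 0"
  shows "br (br x (br x y)) y = 0"
    and "br (br x (br x w)) w = 0"
    and "br (br w x) (br x y) = x"
    and "br (br x y) (br (br x y) (br (br x y) y))
          = br y (br y x) - br y (br y (br y (br y x)))"
proof -
  show "br (br x (br x y)) y = 0" using r2a r1c by (simp add: addl alt)
  show "br (br x (br x w)) w = 0"
  proof -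
    have "br x (br (br w x) w) = br (br x (br w x)) w + br (br w x) (br x w)" by (rule der)
    moreover have "br (br w x) w = - (x + br y w)" using r2c anti[of "br w x" w] by simp
    moreover have "br x w = - br w x" by (rule anti)
    moreover have "br x (br y w) = 0" using r1b anti[of x "br y w"] by simp
    ultimately have "br (br x (br w x)) w = 0"
      by (simp add: negr addr alt diffr)
    moreover have "br x (br x w) = - br x (br w x)" using anti[of x w] negr by simp
    ultimately show ?thesis by (simp add: negl)
  qed
  show "br (br w x) (br x y) = x" by (rule c2[OF r1a r2a r2c])
  define u where "u = br x y"
  define v where "v = br y w"
  define p where "p = br u y"
  define q where "q = br u p"
  define r where "r = br y p"
  have uv: "br u v = y" unfolding u_def v_def by (rule c2[OF r1b r2b r2a])
  have uw: "br u w = 0" using r1a u_def by simp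
  have yx: "br y x = - u" unfolding u_def by (rule anti)
  have pp: "br y (br y x) = p" unfolding p_def yx negr using anti[of u y] by simp
  have yyy: "br y (br y (br y x)) = r" using pp r_def by simp
  have "br r (br y x) = 0" using r3 unfolding yyy .
  hence "br r u = 0" unfolding yx negr by simp
  hence ur: "br u r = 0" using anti[of u r] by simp
  have yq: "br y q = 0"
  proof -
    have "br y q = br (br y u) p + br u r" unfolding q_def r_def by (rule der)
    moreover have "br y u = - p" unfolding p_def by (rule anti)
    ultimately show ?thesis using ur by (simp add: negl alt)
  qed
  have pw: "br p w = y"
  proof -
    have "br w p = br (br w u) y + br u (br w y)" unfolding p_def by (rule der)
    moreover have "br w u = 0" using uw anti[of w u] by simp
    moreover have "br w y = - v" unfolding v_def by (rule anti)
    ultimately have "br w p = - y" using uv by (simp add: zl negr)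
    thus ?thesis using anti[of p w] by simp
  qed
  have qw: "br q w = p"
  proof -
    have "br u (br p w) = br (br u p) w + br p (br u w)" by (rule der)
    thus ?thesis using pw uw zr q_def p_def by simp
  qed
  have qv: "br q v = r"
  proof -
    have "br y (br q w) = br (br y q) w + br q (br y w)" by (rule der)
    thus ?thesis using qw yq zl r_def v_def by simp
  qed
  have yr: "br y r = p - br u q"
  proof -
    have "br y (br q v) = br (br y q) v + br q (br y v)" by (rule der)
    moreover have "br y v = w + u" using r2b u_def v_def by simp
    ultimately have "br y r = br q w + br q u" using qv yq zl by (simp add: addr)
    thus ?thesis using qw anti[of q u] by simp
  qed
  show "br (br x y) (br (br x y) (br (br x y) y))
          = br y (br y x) - br y (br y (br y (br y x)))"
    unfolding pp u_def[symmetric] p_def[symmetric] q_def[symmetric] r_def[symmetric]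
    using yr by simp
qed

end

lemma ad_pow:
  "((ad br a) ^^ 2) b = br a (br a b)"
  "((ad br a) ^^ 3) b = br a (br a (br a b))"
  "((ad br a) ^^ 4) b = br a (br a (br a (br a b)))"
  by (simp_all add: ad_def numeral_eq_Suc)

theorem lemma5p1:
  fixes sc :: "'k::field \<Rightarrow> 'v::ab_group_add \<Rightarrow> 'v"
    and br :: "'v \<Rightarrow> 'v \<Rightarrow> 'v"
    and z :: "nat \<Rightarrow> 'v"
  assumes "CHAR('k) \<noteq> 2"
    and "lie_algebra sc br"
    and "f_relations br z"
  shows "\<forall>i<3. \<forall>j<3.
      br (((ad br (z i)) ^^ 2) (z j)) (z j) = 0 \<and>
      br (br (z ((i+2) mod 3)) (z i)) (br (z i) (z ((i+1) mod 3))) = z i \<and>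
      ((ad br (br (z i) (z ((i+1) mod 3)))) ^^ 3) (z ((i+1) mod 3))
        = ((ad br (z ((i+1) mod 3))) ^^ 2) (z i) - ((ad br (z ((i+1) mod 3))) ^^ 4) (z i)"
proof -
  interpret lbr br
    using assms(2) unfolding lie_algebra_def by unfold_locales auto
  have R: "\<forall>i<3. br (br (z i) (z ((i+1) mod 3))) (z ((i+2) mod 3)) = 0 \<and>
           br (z i) (br (z i) (z ((i+1) mod 3))) = z ((i+1) mod 3) + br (z ((i+2) mod 3)) (z i) \<and>
           br (br (z ((i+1) mod 3)) (br (z ((i+1) mod 3)) (br (z ((i+1) mod 3)) (z i))))
              (br (z ((i+1) mod 3)) (z i)) = 0"
    using assms(3) unfolding f_relations_def by simp
  have l: "(0::nat) < 3" "(1::nat) < 3" "(2::nat) < 3" by simp_all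
  have m: "(0+1) mod 3 = (1::nat)" "(0+2) mod 3 = (2::nat)" "(1+1) mod 3 = (2::nat)"
    "(1+2) mod 3 = (0::nat)" "(2+1) mod 3 = (0::nat)" "(2+2) mod 3 = (1::nat)" by simp_all
  have R0: "br (br (z 0) (z 1)) (z 2) = 0 \<and>
           br (z 0) (br (z 0) (z 1)) = (z 1) + br (z 2) (z 0) \<and>
           br (br (z 1) (br (z 1) (br (z 1) (z 0)))) (br (z 1) (z 0)) = 0"
    using R[rule_format, OF l(1)] unfolding m .
  have R1: "br (br (z 1) (z 2)) (z 0) = 0 \<and>
           br (z 1) (br (z 1) (z 2)) = (z 2) + br (z 0) (z 1) \<and>
           br (br (z 2) (br (z 2) (br (z 2) (z 1)))) (br (z 2) (z 1)) = 0"
    using R[rule_format, OF l(2)] unfolding m .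
  have R2: "br (br (z 2) (z 0)) (z 1) = 0 \<and>
           br (z 2) (br (z 2) (z 0)) = (z 0) + br (z 1) (z 2) \<and>
           br (br (z 0) (br (z 0) (br (z 0) (z 2)))) (br (z 0) (z 2)) = 0"
    using R[rule_format, OF l(3)] unfolding m .
  note K0 = core[OF R0[THEN conjunct1] R1[THEN conjunct1] R2[THEN conjunct1]
      R0[THEN conjunct2, THEN conjunct1] R1[THEN conjunct2, THEN conjunct1]
      R2[THEN conjunct2, THEN conjunct1] R0[THEN conjunct2, THEN conjunct2]]
  note K1 = core[OF R1[THEN conjunct1] R2[THEN conjunct1] R0[THEN conjunct1]
      R1[THEN conjunct2, THEN conjunct1] R2[THEN conjunct2, THEN conjunct1]
      R0[THEN conjunct2, THEN conjunct1] R1[THEN conjunct2, THEN conjunct2]]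
  note K2 = core[OF R2[THEN conjunct1] R0[THEN conjunct1] R1[THEN conjunct1]
      R2[THEN conjunct2, THEN conjunct1] R0[THEN conjunct2, THEN conjunct1]
      R1[THEN conjunct2, THEN conjunct1] R2[THEN conjunct2, THEN conjunct2]]
  have triv: "br (br a (br a a)) a = 0" for a by (simp add: alt zr zl)
  show ?thesis
  proof (intro allI impI)
    fix i j :: nat
    assume "i < 3" "j < 3"
    hence "i = 0 \<or> i = 1 \<or> i = 2" "j = 0 \<or> j = 1 \<or> j = 2" by auto
    thus "br (((ad br (z i)) ^^ 2) (z j)) (z j) = 0 \<and>
      br (br (z ((i+2) mod 3)) (z i)) (br (z i) (z ((i+1) mod 3))) = z i \<and>
      ((ad br (br (z i) (z ((i+1) mod 3)))) ^^ 3) (z ((i+1) mod 3))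
        = ((ad br (z ((i+1) mod 3))) ^^ 2) (z i) - ((ad br (z ((i+1) mod 3))) ^^ 4) (z i)"
      by (elim disjE; hypsubst; unfold m ad_pow; simp only: K0 K1 K2 triv simp_thms)
  qed
qed

end
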